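(* Let $n\ge 1$ and let $I=(i_1,\ldots,i_r)$ be a composition of $n$. Then $$\sum_{\sigma\in\mathfrak S_n,\ \mathrm{SC}(\sigma)=I} q^{\binom{n}{2}-\mathrm{inv}(\sigma)} \;=\; q^{\mathrm{maj}(I)}\,\frac{[n]_q!}{[i_1]_q\,[i_1+i_2]_q\cdots[i_1+i_2+\cdots+i_r]_q},$$ where $\mathrm{maj}(I)=\sum_{j=1}^{r-1}(i_1+\cdots+i_j)$. (The right-hand side is the polynomial $c_I(q)$.)
   Context: Permutations $\sigma\in\mathfrak S_n$ are viewed as words $\sigma_1\sigma_2\cdots\sigma_n$. A word $a_1a_2\cdots a_m$ of integers is initially dominated if $a_1>a_j$ for all $2\le j\le m$. Every permutation has a unique factorization $\sigma=u_1u_2\cdots u_r$ into initially dominated words whose first (maximal) letters are increasing; the saillance composition of $\sigma$ is $\mathrm{SC}(\sigma)=(|u_1|,\ldots,|u_r|)$. $\mathrm{inv}(\sigma)$ is the number of inversions of $\sigma$, $[m]_q=1+q+\cdots+q^{m-1}$ and $[n]_q!=[1]_q[2]_q\cdots[n]_q$. *)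

theory Defs
  imports "HOL-Combinatorics.Multiset_Permutations" "HOL-Computational_Algebra.Polynomial"
begin

definition init_dominated :: "nat list \<Rightarrow> bool" where
  "init_dominated w \<longleftrightarrow> w \<noteq> [] \<and> (\<forall>j. 1 \<le> j \<and> j < length w \<longrightarrow> w ! j < w ! 0)"

definition saillance_comp :: "nat list \<Rightarrow> nat list" where
  "saillance_comp \<sigma> = (THE c. \<exists>us. concat us = \<sigma> \<and> (\<forall>u\<in>set us. init_dominated u)
      \<and> sorted_wrt (<) (map hd us) \<and> c = map length us)"

definition inv_count :: "nat list \<Rightarrow> nat" where
  "inv_count \<sigma> = card {(i, j). i < j \<and> j < length \<sigma> \<and> \<sigma> ! j < \<sigma> ! i}"

definition is_composition :: "nat list \<Rightarrow> nat \<Rightarrow> bool" where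
  "is_composition I n \<longleftrightarrow> (\<forall>i\<in>set I. 0 < i) \<and> sum_list I = n"

definition comp_maj :: "nat list \<Rightarrow> nat" where
  "comp_maj I = (\<Sum>j<length I - 1. sum_list (take (j + 1) I))"

definition qint :: "nat \<Rightarrow> real poly" where
  "qint m = (\<Sum>k<m. monom 1 k)"

definition qfact :: "nat \<Rightarrow> real poly" where
  "qfact n = (\<Prod>m=1..n. qint m)"

end

theory Submission
  imports Defs
begin

definition coinv :: "nat list \<Rightarrow> nat" where
  "coinv s = card {(i, j). i < j \<and> j < length s \<and> s ! i < s ! j}"

definition lrpos :: "nat list \<Rightarrow> nat set" where
  "lrpos s = {k. k < length s \<and> (\<forall>j<k. s ! j < s ! k)}"

lemma pairs_snoc:
  "card {(i, j). i < j \<and> j < length (xs @ [x]) \<and> P ((xs @ [x]) ! i) ((xs @ [x]) ! j)}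
   = card {(i, j). i < j \<and> j < length xs \<and> P (xs ! i) (xs ! j)}
     + card {i. i < length xs \<and> P (xs ! i) x}"
proof -
  let ?A = "{(i, j). i < j \<and> j < length xs \<and> P (xs ! i) (xs ! j)}"
  let ?B = "{i. i < length xs \<and> P (xs ! i) x}"
  have eq: "{(i, j). i < j \<and> j < length (xs @ [x]) \<and> P ((xs @ [x]) ! i) ((xs @ [x]) ! j)}
      = ?A \<union> (\<lambda>i. (i, length xs)) ` ?B"
    by (auto simp: nth_append less_Suc_eq)
  have fA: "finite ?A"
    by (rule finite_subset[of _ "{..<length xs} \<times> {..<length xs}"]) auto
  have fB: "finite ?B" by simp
  have "card (?A \<union> (\<lambda>i. (i, length xs)) ` ?B) = card ?A + card ((\<lambda>i. (i, length xs)) ` ?B)"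
    by (rule card_Un_disjoint) (use fA fB in auto)
  also have "card ((\<lambda>i. (i, length xs)) ` ?B) = card ?B"
    by (rule card_image) (auto simp: inj_on_def)
  finally show ?thesis using eq by simp
qed

lemma card_idx_set:
  assumes "distinct xs"
  shows "card {i. i < length xs \<and> P (xs ! i)} = card {y \<in> set xs. P y}"
proof -
  have "{y \<in> set xs. P y} = nth xs ` {i. i < length xs \<and> P (xs ! i)}"
    by (auto simp: set_conv_nth)
  moreover have "inj_on (nth xs) {i. i < length xs \<and> P (xs ! i)}"
    using assms by (auto simp: inj_on_def nth_eq_iff_index_eq)
  ultimately show ?thesis by (simp add: card_image)
qed

lemma coinv_snoc:
  "distinct xs \<Longrightarrow> coinv (xs @ [x]) = coinv xs + card {y \<in> set xs. y < x}"
  unfolding coinv_def using pairs_snoc[of xs x "(<)"] card_idx_set[of xs "\<lambda>y. y < x"] by simp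

lemma inv_snoc:
  "distinct xs \<Longrightarrow> inv_count (xs @ [x]) = inv_count xs + card {y \<in> set xs. x < y}"
  unfolding inv_count_def using pairs_snoc[of xs x "\<lambda>a b. b < a"] card_idx_set[of xs "\<lambda>y. x < y"] by simp

lemma inv_coinv:
  "distinct s \<Longrightarrow> inv_count s + coinv s = length s choose 2"
proof (induction s rule: rev_induct)
  case Nil
  then show ?case by (simp add: inv_count_def coinv_def)
next
  case (snoc x xs)
  then have d: "distinct xs" "x \<notin> set xs" by auto
  have "card {y \<in> set xs. x < y} + card {y \<in> set xs. y < x} = card ({y \<in> set xs. x < y} \<union> {y \<in> set xs. y < x})"
    by (rule card_Un_disjoint[symmetric]) auto
  also have "{y \<in> set xs. x < y} \<union> {y \<in> set xs. y < x} = set xs"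
    using d by (auto; metis linorder_neqE_nat)
  also have "card (set xs) = length xs" using d by (simp add: distinct_card)
  finally have c: "card {y \<in> set xs. x < y} + card {y \<in> set xs. y < x} = length xs" .
  have "Suc (length xs) choose 2 = (length xs choose 2) + length xs"
    by (simp add: numeral_2_eq_2)
  then show ?case using snoc d c by (simp add: inv_snoc coinv_snoc)
qed

lemma lrpos_append:
  "lrpos (a @ b) = lrpos a \<union> (\<lambda>k. length a + k) ` {k \<in> lrpos b. \<forall>y\<in>set a. y < b ! k}"
proof -
  have "lrpos (a @ b) \<subseteq> lrpos a \<union> (\<lambda>k. length a + k) ` {k \<in> lrpos b. \<forall>y\<in>set a. y < b ! k}"
  proof
    fix k assume k: "k \<in> lrpos (a @ b)"
    show "k \<in> lrpos a \<union> (\<lambda>k. length a + k) ` {k \<in> lrpos b. \<forall>y\<in>set a. y < b ! k}"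
    proof (cases "k < length a")
      case True then show ?thesis using k by (auto simp: lrpos_def nth_append)
    next
      case False
      define m where "m = k - length a"
      have km: "k = length a + m" using False m_def by simp
      have "m \<in> lrpos b"
        unfolding lrpos_def
      proof (intro CollectI conjI allI impI)
        show "m < length b" using k km by (simp add: lrpos_def)
        fix j assume "j < m"
        have all: "\<forall>j<k. (a @ b) ! j < (a @ b) ! k" using k by (simp add: lrpos_def)
        have "(a @ b) ! (length a + j) < (a @ b) ! k" by (rule all[rule_format]) (simp add: km \<open>j < m\<close>)
        then show "b ! j < b ! m" using km by (simp add: nth_append)
      qed
      moreover have "\<forall>y\<in>set a. y < b ! m"
      proof
        fix y assume "y \<in> set a"
        then obtain j where j: "j < length a" "y = a ! j" by (auto simp: in_set_conv_nth)
        have all: "\<forall>j<k. (a @ b) ! j < (a @ b) ! k" using k by (simp add: lrpos_def)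
        have "(a @ b) ! j < (a @ b) ! k" by (rule all[rule_format]) (use j(1) km in linarith)
        then show "y < b ! m" using j km by (simp add: nth_append)
      qed
      ultimately show ?thesis using km by blast
    qed
  qed
  moreover have "lrpos a \<subseteq> lrpos (a @ b)" by (auto simp: lrpos_def nth_append)
  moreover have "(\<lambda>k. length a + k) ` {k \<in> lrpos b. \<forall>y\<in>set a. y < b ! k} \<subseteq> lrpos (a @ b)"
  proof
    fix k assume "k \<in> (\<lambda>k. length a + k) ` {k \<in> lrpos b. \<forall>y\<in>set a. y < b ! k}"
    then obtain m where m: "k = length a + m" "m \<in> lrpos b" "\<forall>y\<in>set a. y < b ! m" by auto
    show "k \<in> lrpos (a @ b)"
      unfolding lrpos_def
    proof (intro CollectI conjI allI impI)
      show "k < length (a @ b)" using m by (simp add: lrpos_def)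
      fix j assume j: "j < k"
      show "(a @ b) ! j < (a @ b) ! k"
      proof (cases "j < length a")
        case True then show ?thesis using m by (auto simp: nth_append)
      next
        case False then show ?thesis using m j by (auto simp: nth_append lrpos_def)
      qed
    qed
  qed
  ultimately show ?thesis by blast
qed

lemma lrpos_snoc:
  "lrpos (xs @ [x]) = lrpos xs \<union> (if \<forall>y\<in>set xs. y < x then {length xs} else {})"
  using lrpos_append[of xs "[x]"] by (auto simp: lrpos_def)

lemma perms_snoc:
  assumes "A \<noteq> {}"
  shows "permutations_of_set A = (\<Union>x\<in>A. (\<lambda>t. t @ [x]) ` permutations_of_set (A - {x}))"
proof
  show "permutations_of_set A \<subseteq> (\<Union>x\<in>A. (\<lambda>t. t @ [x]) ` permutations_of_set (A - {x}))"
  proof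
    fix s assume s: "s \<in> permutations_of_set A"
    then have ss: "set s = A" "distinct s" by (auto simp: permutations_of_set_def)
    then have "s \<noteq> []" using assms by auto
    then have e: "s = butlast s @ [last s]" by simp
    have "distinct (butlast s @ [last s])" using ss e by metis
    then have d2: "distinct (butlast s)" "last s \<notin> set (butlast s)" by auto
    have "set (butlast s @ [last s]) = insert (last s) (set (butlast s))" by simp
    then have "A = insert (last s) (set (butlast s))" using e ss(1) by metis
    then have "set (butlast s) = A - {last s}" using d2 by auto
    then have "butlast s \<in> permutations_of_set (A - {last s})"
      using d2 by (auto simp: permutations_of_set_def)
    moreover have "last s \<in> A" using ss \<open>s \<noteq> []\<close> by auto
    ultimately show "s \<in> (\<Union>x\<in>A. (\<lambda>t. t @ [x]) ` permutations_of_set (A - {x}))"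
      using e by (intro UN_I[of "last s"] image_eqI[of s _ "butlast s"]) auto
  qed
next
  show "(\<Union>x\<in>A. (\<lambda>t. t @ [x]) ` permutations_of_set (A - {x})) \<subseteq> permutations_of_set A"
  proof (intro subsetI, elim UN_E imageE)
    fix s x t assume x: "x \<in> A" and s: "s = t @ [x]" and t: "t \<in> permutations_of_set (A - {x})"
    have "set t = A - {x}" "distinct t" using t by (auto simp: permutations_of_set_def)
    then have "set s = A" "distinct s" using x s by auto
    then show "s \<in> permutations_of_set A" by (simp add: permutations_of_set_def)
  qed
qed

lemma rank_sum:
  fixes A :: "nat set"
  assumes "finite A"
  shows "(\<Sum>x\<in>A. f (card {y\<in>A. y < x})) = (\<Sum>k<card A. f k)"
  using assms
proof (induction "card A" arbitrary: A)
  case 0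
  then show ?case by simp
next
  case (Suc n)
  then have ne: "A \<noteq> {}" by auto
  define M where "M = Max A"
  have MA: "M \<in> A" using ne Suc by (simp add: M_def)
  have cA': "card (A - {M}) = n" using Suc MA by simp
  have big: "\<And>y. y \<in> A \<Longrightarrow> y \<le> M" using Suc by (simp add: M_def)
  have "(\<Sum>x\<in>A. f (card {y\<in>A. y < x})) = f (card {y\<in>A. y < M}) + (\<Sum>x\<in>A - {M}. f (card {y\<in>A. y < x}))"
    using Suc MA by (simp add: sum.remove)
  also have "{y\<in>A. y < M} = A - {M}" using big by force
  also have "(\<Sum>x\<in>A - {M}. f (card {y\<in>A. y < x})) = (\<Sum>x\<in>A - {M}. f (card {y\<in>A - {M}. y < x}))"
  proof (rule sum.cong)
    fix x assume "x \<in> A - {M}"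
    then have "x < M" using big by force
    then have "{y\<in>A. y < x} = {y\<in>A - {M}. y < x}" by auto
    then show "f (card {y\<in>A. y < x}) = f (card {y\<in>A - {M}. y < x})" by simp
  qed simp
  also have "\<dots> = (\<Sum>k<n. f k)" using Suc(1)[of "A - {M}"] cA' Suc by simp
  finally show ?case using cA' by (simp add: Suc(2)[symmetric] add.commute)
qed

lemma sum_perms_snoc:
  assumes "finite A" "A \<noteq> {}"
  shows "(\<Sum>s\<in>permutations_of_set A. g s) = (\<Sum>x\<in>A. \<Sum>t\<in>permutations_of_set (A - {x}). g (t @ [x]))"
proof -
  have "(\<Sum>s\<in>permutations_of_set A. g s) = (\<Sum>x\<in>A. \<Sum>s\<in>(\<lambda>t. t @ [x]) ` permutations_of_set (A - {x}). g s)"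
    unfolding perms_snoc[OF assms(2)]
    by (rule sum.UNION_disjoint) (use assms in auto)
  also have "\<dots> = (\<Sum>x\<in>A. \<Sum>t\<in>permutations_of_set (A - {x}). g (t @ [x]))"
    by (rule sum.cong) (auto simp: sum.reindex inj_on_def)
  finally show ?thesis .
qed

definition Qp :: "nat \<Rightarrow> nat set \<Rightarrow> real poly" where
  "Qp n S = (\<Prod>k<n. if k \<in> S then monom 1 k else qint k)"

lemma count_lr:
  fixes A :: "nat set"
  assumes "finite A" "S \<subseteq> {..<card A}"
  shows "(\<Sum>s\<in>permutations_of_set A. if lrpos s = S then monom (1::real) (coinv s) else 0) = Qp (card A) S"
  using assms
proof (induction "card A" arbitrary: A S)
  case 0
  then have "A = {}" "S = {}" by auto
  then show ?case by (simp add: Qp_def lrpos_def coinv_def)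
next
  case (Suc n)
  then have ne: "A \<noteq> {}" and fin: "finite A" by auto
  define M where "M = Max A"
  have MA: "M \<in> A" using ne fin by (simp add: M_def)
  have big: "\<And>y. y \<in> A \<Longrightarrow> y \<le> M" using fin by (simp add: M_def)
  have cx: "\<And>x. x \<in> A \<Longrightarrow> card (A - {x}) = n" using Suc by simp
  have inner: "(\<Sum>t\<in>permutations_of_set (A - {x}). if lrpos (t @ [x]) = S then monom (1::real) (coinv (t @ [x])) else 0)
     = (if x = M then (if n \<in> S then monom 1 n * Qp n (S - {n}) else 0)
        else (if n \<in> S then 0 else monom 1 (card {y\<in>A. y < x}) * Qp n S))" if xA: "x \<in> A" for x
  proof -
    have eqt: "(if lrpos (t @ [x]) = S then monom (1::real) (coinv (t @ [x])) else 0)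
      = (if x = M then (if n \<in> S then monom 1 n * (if lrpos t = S - {n} then monom 1 (coinv t) else 0) else 0)
        else (if n \<in> S then 0 else monom 1 (card {y\<in>A. y < x}) * (if lrpos t = S then monom 1 (coinv t) else 0)))"
      if t: "t \<in> permutations_of_set (A - {x})" for t
    proof -
      have st: "set t = A - {x}" "distinct t" using t by (auto simp: permutations_of_set_def)
      have lt: "length t = n" using st cx[OF xA] distinct_card by metis
      have lrt: "lrpos t \<subseteq> {..<n}" using lt by (auto simp: lrpos_def)
      have iff: "(\<forall>y\<in>set t. y < x) \<longleftrightarrow> x = M"
      proof
        assume "\<forall>y\<in>set t. y < x"
        then have "\<forall>y\<in>A. y \<le> x" using st by (metis DiffI less_imp_le order_refl singletonD)
        then show "x = M" using big MA xA by (simp add: order_antisym)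
      next
        assume "x = M" then show "\<forall>y\<in>set t. y < x" using st big by force
      qed
      have co: "coinv (t @ [x]) = coinv t + card {y\<in>A. y < x}"
      proof -
        have "{y \<in> set t. y < x} = {y\<in>A. y < x}" using st by auto
        then show ?thesis using coinv_snoc[OF st(2)] by simp
      qed
      have lr: "lrpos (t @ [x]) = lrpos t \<union> (if x = M then {n} else {})"
        using lrpos_snoc[of t x] iff lt by simp
      have Mrank: "x = M \<Longrightarrow> card {y\<in>A. y < x} = n"
      proof -
        assume "x = M"
        then have "{y\<in>A. y < x} = A - {x}" using big by force
        then show ?thesis using cx[OF xA] by simp
      qed
      have nlr: "n \<notin> lrpos t" using lrt by auto
      show ?thesis
      proof (cases "x = M")
        case True
        have lr2: "lrpos (t @ [x]) = insert n (lrpos t)" using lr True by simp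
        have co2: "monom (1::real) (coinv (t @ [x])) = monom 1 n * monom 1 (coinv t)"
          using co Mrank[OF True] by (simp add: mult_monom add.commute)
        show ?thesis
        proof (cases "n \<in> S")
          case True
          have "(insert n (lrpos t) = S) \<longleftrightarrow> (lrpos t = S - {n})" using True nlr by blast
          then show ?thesis using True \<open>x = M\<close> lr2 co2 by simp
        next
          case False
          have "insert n (lrpos t) \<noteq> S" using False by blast
          then show ?thesis using False \<open>x = M\<close> lr2 by simp
        qed
      next
        case False
        have lr2: "lrpos (t @ [x]) = lrpos t" using lr False by simp
        have co2: "monom (1::real) (coinv (t @ [x])) = monom 1 (card {y\<in>A. y < x}) * monom 1 (coinv t)"
          using co by (simp add: mult_monom add.commute)
        show ?thesis
        proof (cases "n \<in> S")
          case True
          have "lrpos t \<noteq> S" using True nlr by blast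
          then show ?thesis using True False lr2 by simp
        next
          case nS: False
          then show ?thesis using False lr2 co2 by simp
        qed
      qed
    qed
    have fA: "finite (A - {x})" using fin by simp
    have IH: "\<And>T. T \<subseteq> {..<n} \<Longrightarrow> (\<Sum>t\<in>permutations_of_set (A - {x}). if lrpos t = T then monom (1::real) (coinv t) else 0) = Qp n T"
      using Suc(1)[of "A - {x}"] cx[OF xA] fA by metis
    have SS: "S \<subseteq> {..<Suc n}" using Suc(2) Suc(4) by simp
    have S1: "n \<in> S \<Longrightarrow> S - {n} \<subseteq> {..<n}" using SS by (auto simp: less_Suc_eq)
    have S2: "n \<notin> S \<Longrightarrow> S \<subseteq> {..<n}" using SS by (auto simp: less_Suc_eq)
    have "(\<Sum>t\<in>permutations_of_set (A - {x}). if lrpos (t @ [x]) = S then monom (1::real) (coinv (t @ [x])) else 0)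
      = (\<Sum>t\<in>permutations_of_set (A - {x}). (if x = M then (if n \<in> S then monom 1 n * (if lrpos t = S - {n} then monom 1 (coinv t) else 0) else 0)
        else (if n \<in> S then 0 else monom 1 (card {y\<in>A. y < x}) * (if lrpos t = S then monom 1 (coinv t) else 0))))"
      by (rule sum.cong[OF refl eqt])
    also have "\<dots> = (if x = M then (if n \<in> S then monom 1 n * Qp n (S - {n}) else 0)
        else (if n \<in> S then 0 else monom 1 (card {y\<in>A. y < x}) * Qp n S))"
    proof (cases "x = M")
      case True
      then show ?thesis
      proof (cases "n \<in> S")
        case True
        then show ?thesis using \<open>x = M\<close> IH[OF S1[OF True]] by (simp add: sum_distrib_left[symmetric])
      qed simp
    next
      case False
      then show ?thesis
      proof (cases "n \<in> S")
        case nS: False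
        then show ?thesis using False IH[OF S2[OF nS]] by (simp add: sum_distrib_left[symmetric])
      qed simp
    qed
    finally show ?thesis .
  qed
  have "(\<Sum>s\<in>permutations_of_set A. if lrpos s = S then monom (1::real) (coinv s) else 0)
     = (\<Sum>x\<in>A. (if x = M then (if n \<in> S then monom 1 n * Qp n (S - {n}) else 0)
        else (if n \<in> S then 0 else monom 1 (card {y\<in>A. y < x}) * Qp n S)))"
    using inner by (simp add: sum_perms_snoc[OF fin ne])
  also have "\<dots> = Qp (Suc n) S"
  proof (cases "n \<in> S")
    case True
    have "Qp n (S - {n}) = Qp n S" unfolding Qp_def by (rule prod.cong) auto
    have "(\<Sum>x\<in>A. (if x = M then (if n \<in> S then monom 1 n * Qp n (S - {n}) else 0)
        else (if n \<in> S then 0 else monom 1 (card {y\<in>A. y < x}) * Qp n S)))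
       = (\<Sum>x\<in>A. (if x = M then monom 1 n * Qp n S else 0))"
      using True \<open>Qp n (S - {n}) = Qp n S\<close> by (intro sum.cong) auto
    also have "\<dots> = monom 1 n * Qp n S" using MA fin by (simp add: sum.delta)
    also have "\<dots> = Qp (Suc n) S" using True by (simp add: Qp_def mult.commute)
    finally show ?thesis .
  next
    case False
    have "(\<Sum>x\<in>A. (if x = M then (if n \<in> S then monom 1 n * Qp n (S - {n}) else 0)
        else (if n \<in> S then 0 else monom 1 (card {y\<in>A. y < x}) * Qp n S)))
       = (\<Sum>x\<in>A - {M}. monom 1 (card {y\<in>A. y < x})) * Qp n S"
      using False MA fin by (simp add: sum.remove sum_distrib_right)
    also have "(\<Sum>x\<in>A - {M}. monom (1::real) (card {y\<in>A. y < x})) = (\<Sum>x\<in>A - {M}. monom 1 (card {y\<in>A - {M}. y < x}))"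
    proof (rule sum.cong)
      fix x assume "x \<in> A - {M}"
      then have "x < M" using big by force
      then have "{y\<in>A. y < x} = {y\<in>A - {M}. y < x}" by auto
      then show "monom (1::real) (card {y\<in>A. y < x}) = monom 1 (card {y\<in>A - {M}. y < x})" by simp
    qed simp
    also have "\<dots> = (\<Sum>k<n. monom 1 k)" using rank_sum[of "A - {M}" "monom 1"] fin cx[OF MA] by simp
    also have "\<dots> = qint n" by (simp add: qint_def)
    finally show ?thesis using False by (simp add: Qp_def)
  qed
  finally show ?case using Suc by simp
qed

definition valid_fact :: "nat list list \<Rightarrow> nat list \<Rightarrow> bool" where
  "valid_fact us s \<longleftrightarrow> concat us = s \<and> (\<forall>u\<in>set us. init_dominated u) \<and> sorted_wrt (<) (map hd us)"

definition starts :: "nat list \<Rightarrow> nat set" where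
  "starts L = (\<lambda>j. sum_list (take j L)) ` {..<length L}"

lemma starts_snoc: "starts (L @ [l]) = insert (sum_list L) (starts L)"
proof -
  have "starts (L @ [l]) = (\<lambda>j. sum_list (take j (L @ [l]))) ` {..<Suc (length L)}"
    by (simp add: starts_def)
  also have "\<dots> = (\<lambda>j. sum_list (take j (L @ [l]))) ` insert (length L) {..<length L}"
    by (simp add: lessThan_Suc)
  also have "\<dots> = insert (sum_list L) ((\<lambda>j. sum_list (take j L)) ` {..<length L})"
    by (auto simp: image_iff)
  finally show ?thesis by (simp add: starts_def)
qed

lemma lrpos_init_dom: "init_dominated w \<Longrightarrow> lrpos w = {0}"
proof -
  assume w: "init_dominated w"
  have "0 \<in> lrpos w" using w by (auto simp: lrpos_def init_dominated_def)
  moreover have "k = 0" if "k \<in> lrpos w" for k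
  proof (rule ccontr)
    assume "k \<noteq> 0"
    then have "w ! 0 < w ! k" "w ! k < w ! 0" using that w by (auto simp: lrpos_def init_dominated_def)
    then show False by simp
  qed
  ultimately show ?thesis by blast
qed

lemma init_dom_le_hd: "init_dominated u \<Longrightarrow> y \<in> set u \<Longrightarrow> y \<le> hd u"
proof -
  assume u: "init_dominated u" and y: "y \<in> set u"
  then obtain j where j: "j < length u" "y = u ! j" by (auto simp: in_set_conv_nth)
  have "u \<noteq> []" using u by (simp add: init_dominated_def)
  then have "hd u = u ! 0" by (simp add: hd_conv_nth)
  then show ?thesis using u j by (cases "j = 0") (auto simp: init_dominated_def less_imp_le)
qed

lemma lrpos_valid:
  "(\<forall>u\<in>set us. init_dominated u) \<Longrightarrow> sorted_wrt (<) (map hd us) \<Longrightarrow> lrpos (concat us) = starts (map length us)"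
proof (induction us rule: rev_induct)
  case Nil
  then show ?case by (simp add: lrpos_def starts_def)
next
  case (snoc w us)
  have w: "init_dominated w" using snoc by simp
  have wne: "w \<noteq> []" using w by (simp add: init_dominated_def)
  have IH: "lrpos (concat us) = starts (map length us)" using snoc by (simp add: sorted_wrt_append)
  have hdlt: "\<forall>u\<in>set us. hd u < hd w" using snoc.prems(2) by (simp add: sorted_wrt_append)
  have all: "\<forall>y\<in>set (concat us). y < w ! 0"
  proof
    fix y assume "y \<in> set (concat us)"
    then obtain u where u: "u \<in> set us" "y \<in> set u" by auto
    have "y \<le> hd u" using init_dom_le_hd u snoc.prems(1) by simp
    also have "hd u < hd w" using hdlt u by simp
    finally show "y < w ! 0" using wne by (simp add: hd_conv_nth)
  qed
  have "lrpos (concat (us @ [w])) = lrpos (concat us) \<union> (\<lambda>k. length (concat us) + k) ` {k \<in> lrpos w. \<forall>y\<in>set (concat us). y < w ! k}"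
    using lrpos_append[of "concat us" w] by simp
  also have "{k \<in> lrpos w. \<forall>y\<in>set (concat us). y < w ! k} = {0}"
    using lrpos_init_dom[OF w] all by auto
  finally show ?case using IH by (simp add: starts_snoc length_concat)
qed

lemma exists_fact:
  "distinct s \<Longrightarrow> \<exists>us. valid_fact us s \<and> (s \<noteq> [] \<longrightarrow> us \<noteq> [] \<and> (\<forall>y\<in>set s. y \<le> hd (last us)))"
proof (induction s rule: rev_induct)
  case Nil
  show ?case by (rule exI[of _ "[]"]) (simp add: valid_fact_def)
next
  case (snoc x s)
  then have ds: "distinct s" "x \<notin> set s" by auto
  obtain us where us: "valid_fact us s" "s \<noteq> [] \<longrightarrow> us \<noteq> [] \<and> (\<forall>y\<in>set s. y \<le> hd (last us))"
    using snoc.IH ds by blast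
  have us1: "concat us = s" "\<forall>u\<in>set us. init_dominated u" "sorted_wrt (<) (map hd us)"
    using us(1) by (auto simp: valid_fact_def)
  show ?case
  proof (cases "\<forall>y\<in>set s. y < x")
    case True
    have hds: "\<forall>u\<in>set us. hd u < x"
    proof
      fix u assume u: "u \<in> set us"
      then have "u \<noteq> []" using us1(2) by (auto simp: init_dominated_def)
      then have "hd u \<in> set u" by (rule hd_in_set)
      then have "hd u \<in> set s" using u us1(1) by force
      then show "hd u < x" using True by simp
    qed
    have "valid_fact (us @ [[x]]) (s @ [x])"
      using us1 hds by (auto simp: valid_fact_def sorted_wrt_append init_dominated_def)
    moreover have "\<forall>y\<in>set (s @ [x]). y \<le> hd (last (us @ [[x]]))" using True by (auto simp: less_imp_le)
    ultimately show ?thesis by blast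
  next
    case False
    then obtain y0 where y0: "y0 \<in> set s" "x \<le> y0" by auto
    then have sne: "s \<noteq> []" by auto
    then have une: "us \<noteq> []" and mx: "\<forall>y\<in>set s. y \<le> hd (last us)" using us(2) by auto
    then obtain vs w where vw: "us = vs @ [w]" by (metis append_butlast_last_id)
    have w: "init_dominated w" using us1(2) vw by simp
    have wne: "w \<noteq> []" using w by (simp add: init_dominated_def)
    have hw: "hd w \<in> set s" using us1(1) vw wne by auto
    have xlt: "x < hd w"
    proof -
      have "x \<le> hd w" using y0 mx vw by (metis last_snoc order_trans)
      moreover have "x \<noteq> hd w" using hw ds(2) by auto
      ultimately show ?thesis by simp
    qed
    have idw: "init_dominated (w @ [x])"
      unfolding init_dominated_def
    proof (intro conjI allI impI)
      show "w @ [x] \<noteq> []" by simp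
      fix j assume j: "1 \<le> j \<and> j < length (w @ [x])"
      show "(w @ [x]) ! j < (w @ [x]) ! 0"
      proof (cases "j < length w")
        case True
        then show ?thesis using w j wne by (simp add: nth_append init_dominated_def)
      next
        case False
        then have "j = length w" using j by simp
        then show ?thesis using xlt wne by (simp add: nth_append hd_conv_nth)
      qed
    qed
    have "valid_fact (vs @ [w @ [x]]) (s @ [x])"
      using us1 vw idw wne by (auto simp: valid_fact_def sorted_wrt_append)
    moreover have "\<forall>y\<in>set (s @ [x]). y \<le> hd (last (vs @ [w @ [x]]))"
      using mx vw wne xlt by auto
    ultimately show ?thesis by blast
  qed
qed

definition pos_list :: "nat list \<Rightarrow> bool" where
  "pos_list L \<longleftrightarrow> (\<forall>x\<in>set L. 0 < x)"

lemma sum_take_le: "sum_list (take i (xs :: nat list)) \<le> sum_list xs"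
proof -
  have "sum_list xs = sum_list (take i xs) + sum_list (drop i xs)"
    by (metis append_take_drop_id sum_list_append)
  then show ?thesis by simp
qed

lemma sum_take_mono: "i \<le> j \<Longrightarrow> sum_list (take i (xs :: nat list)) \<le> sum_list (take j xs)"
  using sum_take_le[of i "take j xs"] by (simp add: min_def)

lemma sum_take_Suc: "j < length xs \<Longrightarrow> sum_list (take (Suc j) xs) = sum_list (take j xs) + xs ! j"
  by (simp add: take_Suc_conv_app_nth)

lemma sum_take_strict:
  assumes "pos_list L" "i < j" "j \<le> length L"
  shows "sum_list (take i L) < sum_list (take j L)"
proof -
  have il: "i < length L" using assms by simp
  have "0 < L ! i" using assms(1) il by (simp add: pos_list_def)
  then have "sum_list (take i L) < sum_list (take (Suc i) L)" using sum_take_Suc[OF il] by simp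
  also have "\<dots> \<le> sum_list (take j L)" using assms by (intro sum_take_mono) simp
  finally show ?thesis .
qed

definition psum :: "nat list \<Rightarrow> nat list" where
  "psum L = map (\<lambda>j. sum_list (take j L)) [0..<Suc (length L)]"

lemma psum_sorted: "pos_list L \<Longrightarrow> sorted_wrt (<) (psum L)"
  unfolding sorted_wrt_iff_nth_less psum_def
  by (auto simp del: upt_Suc intro!: sum_take_strict)

lemma set_psum: "set (psum L) = insert (sum_list L) (starts L)"
proof -
  have "set (psum L) = (\<lambda>j. sum_list (take j L)) ` {..<Suc (length L)}"
    by (simp add: psum_def atLeast0LessThan del: upt_Suc)
  also have "{..<Suc (length L)} = insert (length L) {..<length L}" by auto
  finally show ?thesis by (simp add: starts_def)
qed

lemma psum_inj: assumes "psum L1 = psum L2" shows "L1 = L2"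
proof -
  have len: "length L1 = length L2" using arg_cong[OF assms, of length] by (simp add: psum_def)
  show ?thesis
  proof (rule nth_equalityI[OF len])
    fix j assume j: "j < length L1"
    have a: "psum L ! k = sum_list (take k L)" if "k \<le> length L" for L k
      using that unfolding psum_def by (simp del: upt_Suc add: nth_map_upt)
    have "L1 ! j = psum L1 ! Suc j - psum L1 ! j"
      using j a[of j L1] a[of "Suc j" L1] sum_take_Suc[OF j] by simp
    also have "\<dots> = psum L2 ! Suc j - psum L2 ! j" using assms by simp
    also have "\<dots> = L2 ! j"
      using j len a[of j L2] a[of "Suc j" L2] sum_take_Suc[of j L2] by simp
    finally show "L1 ! j = L2 ! j" .
  qed
qed

lemma starts_inj:
  assumes "pos_list L1" "pos_list L2" "sum_list L1 = sum_list L2" "starts L1 = starts L2"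
  shows "L1 = L2"
proof -
  have "psum L1 = psum L2"
  proof (rule sorted_distinct_set_unique)
    show "sorted (psum L1)" "distinct (psum L1)" "sorted (psum L2)" "distinct (psum L2)"
      using psum_sorted[OF assms(1)] psum_sorted[OF assms(2)] by (auto simp: strict_sorted_iff)
    show "set (psum L1) = set (psum L2)" using assms by (simp add: set_psum)
  qed
  then show ?thesis by (rule psum_inj)
qed

lemma valid_pos: "valid_fact us s \<Longrightarrow> pos_list (map length us) \<and> sum_list (map length us) = length s"
  by (auto simp: valid_fact_def pos_list_def init_dominated_def length_concat)

lemma sc_eq:
  assumes "distinct s" "valid_fact us s"
  shows "saillance_comp s = map length us"
proof -
  have "(THE c. \<exists>us. concat us = s \<and> (\<forall>u\<in>set us. init_dominated u)
      \<and> sorted_wrt (<) (map hd us) \<and> c = map length us) = map length us"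
  proof (rule the_equality)
    show "\<exists>vs. concat vs = s \<and> (\<forall>u\<in>set vs. init_dominated u)
      \<and> sorted_wrt (<) (map hd vs) \<and> map length us = map length vs"
      using assms(2) by (auto simp: valid_fact_def)
  next
    fix c assume "\<exists>vs. concat vs = s \<and> (\<forall>u\<in>set vs. init_dominated u)
      \<and> sorted_wrt (<) (map hd vs) \<and> c = map length vs"
    then obtain vs where vs: "valid_fact vs s" "c = map length vs" by (auto simp: valid_fact_def)
    have "starts (map length vs) = starts (map length us)"
      using lrpos_valid vs(1) assms(2) unfolding valid_fact_def by metis
    then show "c = map length us"
      using starts_inj valid_pos[OF vs(1)] valid_pos[OF assms(2)] vs(2) by metis
  qed
  then show ?thesis by (simp add: saillance_comp_def)
qed

lemma sc_iff:
  assumes "distinct s" "pos_list I" "sum_list I = length s"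
  shows "saillance_comp s = I \<longleftrightarrow> lrpos s = starts I"
proof -
  obtain us where us: "valid_fact us s" using exists_fact[OF assms(1)] by blast
  have sc: "saillance_comp s = map length us" by (rule sc_eq[OF assms(1) us])
  have lr: "lrpos s = starts (map length us)" using lrpos_valid us unfolding valid_fact_def by metis
  show ?thesis
  proof
    assume "saillance_comp s = I" then show "lrpos s = starts I" using sc lr by simp
  next
    assume "lrpos s = starts I"
    then show "saillance_comp s = I"
      using sc lr starts_inj[of "map length us" I] valid_pos[OF us] assms by simp
  qed
qed

lemma prod_monom: "finite A \<Longrightarrow> (\<Prod>k\<in>A. monom (1::real) k) = monom 1 (\<Sum>A)"
  by (induction A rule: finite_induct) (simp_all add: mult_monom)

lemma qint_nz: "0 < m \<Longrightarrow> qint m \<noteq> 0"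
proof -
  assume m: "0 < m"
  have "coeff (qint m) 0 = (\<Sum>k<m. if k = 0 then 1 else 0)"
    by (simp add: qint_def coeff_sum coeff_monom)
  also have "\<dots> = 1" using m by (simp add: sum.delta)
  finally show ?thesis by auto
qed

lemma algebra_part:
  fixes I :: "nat list" and n :: nat
  assumes pos: "pos_list I" and sI: "sum_list I = n" and n1: "n \<ge> 1"
  shows "Qp n (starts I) = monom 1 (comp_maj I) * qfact n div (\<Prod>j<length I. qint (sum_list (take (j + 1) I)))"
proof -
  define r where "r = length I"
  define s where "s j = sum_list (take j I)" for j
  define S where "S = starts I"
  define T where "T = (\<lambda>j. s (Suc j)) ` {..<r}"
  have S_def': "S = s ` {..<r}" by (simp add: S_def starts_def s_def r_def)
  have r1: "r \<ge> 1" using n1 sI by (cases I) (auto simp: r_def)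
  have sr: "s r = n" using sI by (simp add: s_def r_def)
  have s0: "s 0 = 0" by (simp add: s_def)
  have mono: "\<And>i j. i < j \<Longrightarrow> j \<le> r \<Longrightarrow> s i < s j"
    using sum_take_strict[OF pos] by (simp add: s_def r_def)
  have sinj: "\<And>i j. i \<le> r \<Longrightarrow> j \<le> r \<Longrightarrow> s i = s j \<Longrightarrow> i = j"
    by (metis linorder_neqE_nat mono order.strict_iff_not)
  have Ssub: "S \<subseteq> {..<n}"
    using mono sr by (auto simp: S_def' r_def)
  have finS: "finite S" by (simp add: S_def')
  have Qsplit: "Qp n S = (\<Prod>k\<in>S. monom 1 k) * (\<Prod>k\<in>{..<n} - S. qint k)"
  proof -
    have "Qp n S = (\<Prod>k\<in>{..<n} \<inter> {x. x \<in> S}. monom 1 k) * (\<Prod>k\<in>{..<n} \<inter> - {x. x \<in> S}. qint k)"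
      unfolding Qp_def by (rule prod.If_cases) simp
    also have "{..<n} \<inter> {x. x \<in> S} = S" using Ssub by auto
    also have "{..<n} \<inter> - {x. x \<in> S} = {..<n} - S" by auto
    finally show ?thesis .
  qed
  have sumS: "\<Sum>S = comp_maj I"
  proof -
    have "\<Sum>S = (\<Sum>j<r. s j)"
      unfolding S_def' by (rule sum.reindex_cong[of s]) (auto simp: inj_on_def intro: sinj)
    also have "\<dots> = (\<Sum>j<Suc (r - 1). s j)" using r1 by simp
    also have "\<dots> = s 0 + (\<Sum>j<r - 1. s (Suc j))" by (rule sum.lessThan_Suc_shift)
    also have "\<dots> = comp_maj I" by (simp add: s0 comp_maj_def s_def r_def)
    finally show ?thesis .
  qed
  have injT: "inj_on (\<lambda>j. s (Suc j)) {..<r}"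
  proof (rule inj_onI)
    fix x y assume "x \<in> {..<r}" "y \<in> {..<r}" "s (Suc x) = s (Suc y)"
    then have "Suc x = Suc y" using sinj[of "Suc x" "Suc y"] by simp
    then show "x = y" by simp
  qed
  have D: "(\<Prod>j<length I. qint (sum_list (take (j + 1) I))) = (\<Prod>k\<in>T. qint k)"
  proof -
    have "(\<Prod>k\<in>T. qint k) = (\<Prod>j<r. qint (s (Suc j)))"
      unfolding T_def by (rule prod.reindex_cong[OF injT]) auto
    then show ?thesis by (simp add: s_def r_def)
  qed
  have Tsub: "T \<subseteq> {1..n}"
  proof
    fix k assume "k \<in> T"
    then obtain j where j: "j < r" "k = s (Suc j)" by (auto simp: T_def)
    have "s 0 < s (Suc j)" using mono[of 0 "Suc j"] j by simp
    moreover have "s (Suc j) \<le> s r"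
    proof (cases "Suc j = r")
      case False then show ?thesis using mono[of "Suc j" r] j by simp
    qed simp
    ultimately have "s 0 < s (Suc j)" "s (Suc j) \<le> s r" by auto
    then show "k \<in> {1..n}" using j s0 sr by auto
  qed
  have disj: "({..<n} - S) \<inter> T = {}"
  proof (rule ccontr)
    assume "({..<n} - S) \<inter> T \<noteq> {}"
    then obtain j where j: "j < r" "s (Suc j) < n" "s (Suc j) \<notin> S" by (auto simp: T_def)
    have "Suc j \<noteq> r" using j sr by auto
    then have "Suc j < r" using j by simp
    then show False using j(3) by (auto simp: S_def')
  qed
  have un: "({..<n} - S) \<union> T = {1..n}"
  proof
    show "({..<n} - S) \<union> T \<subseteq> {1..n}"
    proof -
      have "0 \<in> S" using r1 s0 by (auto simp: S_def' intro!: image_eqI[of 0])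
      then have "{..<n} - S \<subseteq> {1..n}" by (auto simp: Suc_le_eq) (metis gr0I)
      then show ?thesis using Tsub by blast
    qed
  next
    show "{1..n} \<subseteq> ({..<n} - S) \<union> T"
    proof
      fix k assume k: "k \<in> {1..n}"
      show "k \<in> ({..<n} - S) \<union> T"
      proof (cases "k \<in> T")
        case False
        have "k \<noteq> n" using False sr r1 by (auto simp: T_def intro!: image_eqI[of _ _ "r - 1"])
        moreover have "k \<notin> S"
        proof
          assume "k \<in> S"
          then obtain j where j: "j < r" "k = s j" by (auto simp: S_def')
          then have "j \<noteq> 0" using k s0 by (metis atLeastAtMost_iff not_one_le_zero)
          then have "k \<in> T" using j by (auto simp: T_def intro!: image_eqI[of _ _ "j - 1"])
          then show False using False by simp
        qed
        ultimately show ?thesis using k by auto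
      qed simp
    qed
  qed
  have qf: "qfact n = (\<Prod>k\<in>{..<n} - S. qint k) * (\<Prod>k\<in>T. qint k)"
    unfolding qfact_def un[symmetric] by (rule prod.union_disjoint) (simp, simp add: T_def, rule disj)
  have Dnz: "(\<Prod>k\<in>T. qint k) \<noteq> 0"
    using Tsub qint_nz by (auto simp: T_def)
  have "monom 1 (comp_maj I) * qfact n = Qp n S * (\<Prod>k\<in>T. qint k)"
    using Qsplit qf prod_monom[OF finS] sumS by (simp add: mult.assoc)
  then have "monom 1 (comp_maj I) * qfact n div (\<Prod>k\<in>T. qint k) = Qp n S"
    using Dnz by simp
  then show ?thesis using D by (simp add: S_def)
qed

theorem mainTheorem1:
  fixes n :: nat and I :: "nat list"
  assumes "n \<ge> 1" and "is_composition I n"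
  shows "(\<Sum>\<sigma>\<in>{\<sigma> \<in> permutations_of_set {1..n}. saillance_comp \<sigma> = I}.
            monom (1::real) ((n choose 2) - inv_count \<sigma>))
         = monom 1 (comp_maj I) * qfact n
           div (\<Prod>j<length I. qint (sum_list (take (j + 1) I)))"
proof -
  have pos: "pos_list I" and sI: "sum_list I = n"
    using assms(2) by (auto simp: is_composition_def pos_list_def)
  have Ssub: "starts I \<subseteq> {..<n}"
  proof
    fix k assume "k \<in> starts I"
    then obtain j where j: "j < length I" "k = sum_list (take j I)" by (auto simp: starts_def)
    then show "k \<in> {..<n}" using sum_take_strict[OF pos j(1)] sI by simp
  qed
  let ?P = "permutations_of_set {1..n}"
  have "(\<Sum>\<sigma>\<in>{\<sigma> \<in> ?P. saillance_comp \<sigma> = I}. monom (1::real) ((n choose 2) - inv_count \<sigma>))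
      = (\<Sum>\<sigma>\<in>?P. if saillance_comp \<sigma> = I then monom (1::real) ((n choose 2) - inv_count \<sigma>) else 0)"
    by (simp add: sum.inter_filter)
  also have "\<dots> = (\<Sum>\<sigma>\<in>?P. if lrpos \<sigma> = starts I then monom (1::real) (coinv \<sigma>) else 0)"
  proof (rule sum.cong[OF refl])
    fix s assume s: "s \<in> ?P"
    have ds: "distinct s" and ls: "length s = n"
      using s by (auto simp: permutations_of_set_def dest: distinct_card)
    have "(n choose 2) - inv_count s = coinv s" using inv_coinv[OF ds] ls by simp
    moreover have "saillance_comp s = I \<longleftrightarrow> lrpos s = starts I"
      using sc_iff[OF ds pos] sI ls by simp
    ultimately show "(if saillance_comp s = I then monom (1::real) ((n choose 2) - inv_count s) else 0)
       = (if lrpos s = starts I then monom (1::real) (coinv s) else 0)" by simp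
  qed
  also have "\<dots> = Qp n (starts I)" using count_lr[of "{1..n}" "starts I"] Ssub by simp
  also have "\<dots> = monom 1 (comp_maj I) * qfact n div (\<Prod>j<length I. qint (sum_list (take (j + 1) I)))"
    by (rule algebra_part[OF pos sI assms(1)])
  finally show ?thesis .
qed

end
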